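(* Let $L:\mathbb{R}^n\times\mathbb{R}^n\to\mathbb{R}$ be smooth (time-independent). For $a=(q_a,t_a)$, $b=(q_b,t_b)\in\mathbb{R}^n\times\mathbb{R}$ with $t_b\neq t_a$ put $$v(a,b)=\frac{q_b-q_a}{t_b-t_a},\qquad e(a,b)=L(q_a,v(a,b))-\langle D_2L(q_a,v(a,b)),v(a,b)\rangle .$$ Consider sequences $x_k=(q_k,t_k)$ (with $t_{k+1}\ne t_k$), and write $v_k=v(x_k,x_{k+1})$, $e_{k+1}=e(x_k,x_{k+1})$. The symplectic–energy Störmer-type scheme is $$e_{k+1}=e_k,\qquad (t_{k+1}-t_k)\,D_1L(q_k,v_k)-\big(D_2L(q_k,v_k)-D_2L(q_{k-1},v_{k-1})\big)=0 .$$ Then: (i) along any solution the energy $E_k:=\langle D_2L(q_{k-1},v_{k-1}),v_{k-1}\rangle-L(q_{k-1},v_{k-1})=-e_k$ is constant in $k$; (ii) if $U\subset(\mathbb{R}^n\times\mathbb{R})^2$ is open and $G:U\to(\mathbb{R}^n\times\mathbb{R})^2$ is smooth with $G(x_{k-1},x_k)=(x_k,x_{k+1})$ satisfying the scheme for every $(x_{k-1},x_k)\in U$, then, defining on $U$ the one-form $\theta^L=e(a,b)\,dt_b+\sum_i D_2L(q_a,v(a,b))_i\,dq_b^i$ and $\omega^L=d\theta^L$, we have $G^*\omega^L=\omega^L$ (the Lagrangian two-form is preserved).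
   Context: This scheme is the discrete Euler–Lagrange system obtained from the generalized discrete Hamilton's principle with time as a generalized coordinate: parametric discrete Lagrangian $\bar L_d=\Delta_\tau t_k\,L(q_k,\Delta_\tau q_k/\Delta_\tau t_k)$ with forward differences $\Delta_\tau q_k=(q_{k+1}-q_k)/\tau$, $\Delta_\tau t_k=(t_{k+1}-t_k)/\tau$, and $e_{k+1}=\partial\bar L_d/\partial(\Delta_\tau t_k)$. *)

theory Defs
  imports "HOL-Analysis.Analysis"
begin

fun Ck_on :: "nat \<Rightarrow> 'a::euclidean_space set \<Rightarrow> ('a \<Rightarrow> 'b::euclidean_space) \<Rightarrow> bool" where
  "Ck_on 0 S f = continuous_on S f"
| "Ck_on (Suc k) S f =
     ((\<forall>x\<in>S. f differentiable (at x)) \<and>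
      (\<forall>i\<in>Basis. Ck_on k S (\<lambda>x. frechet_derivative f (at x) i)))"

definition smooth_on :: "'a::euclidean_space set \<Rightarrow> ('a \<Rightarrow> 'b::euclidean_space) \<Rightarrow> bool" where
  "smooth_on S f \<longleftrightarrow> (\<forall>k. Ck_on k S f)"

definition D1 :: "((real^'n) \<times> (real^'n) \<Rightarrow> real) \<Rightarrow> real^'n \<Rightarrow> real^'n \<Rightarrow> real^'n" where
  "D1 L q v = (\<chi> i. frechet_derivative L (at (q, v)) (axis i 1, 0))"

definition D2 :: "((real^'n) \<times> (real^'n) \<Rightarrow> real) \<Rightarrow> real^'n \<Rightarrow> real^'n \<Rightarrow> real^'n" where
  "D2 L q v = (\<chi> i. frechet_derivative L (at (q, v)) (0, axis i 1))"

definition vel :: "(real^'n) \<times> real \<Rightarrow> (real^'n) \<times> real \<Rightarrow> real^'n" where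
  "vel a b = (fst b - fst a) /\<^sub>R (snd b - snd a)"

definition en :: "((real^'n) \<times> (real^'n) \<Rightarrow> real) \<Rightarrow> (real^'n) \<times> real \<Rightarrow> (real^'n) \<times> real \<Rightarrow> real" where
  "en L a b = L (fst a, vel a b) - D2 L (fst a) (vel a b) \<bullet> vel a b"

text \<open>The scheme relating x_{k-1}=a, x_k=b, x_{k+1}=c.\<close>
definition scheme :: "((real^'n) \<times> (real^'n) \<Rightarrow> real) \<Rightarrow> (real^'n) \<times> real \<Rightarrow> (real^'n) \<times> real \<Rightarrow> (real^'n) \<times> real \<Rightarrow> bool" where
  "scheme L a b c \<longleftrightarrow> snd c \<noteq> snd b \<and> en L b c = en L a b \<and>
     (snd c - snd b) *\<^sub>R D1 L (fst b) (vel b c) - (D2 L (fst b) (vel b c) - D2 L (fst a) (vel a b)) = 0"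

text \<open>Discrete energy E_k for k >= 1.\<close>
definition energy :: "((real^'n) \<times> (real^'n) \<Rightarrow> real) \<Rightarrow> (nat \<Rightarrow> (real^'n) \<times> real) \<Rightarrow> nat \<Rightarrow> real" where
  "energy L x k = D2 L (fst (x (k - 1))) (vel (x (k - 1)) (x k)) \<bullet> vel (x (k - 1)) (x k)
                  - L (fst (x (k - 1)), vel (x (k - 1)) (x k))"

text \<open>The one-form theta^L = e(a,b) dt_b + sum_i D2L(q_a,v(a,b))_i dq_b^i, represented
  (via the inner product) as a vector field on (R^n x R)^2.\<close>
definition theta :: "((real^'n) \<times> (real^'n) \<Rightarrow> real) \<Rightarrow> ((real^'n) \<times> real) \<times> ((real^'n) \<times> real)
                     \<Rightarrow> ((real^'n) \<times> real) \<times> ((real^'n) \<times> real)" where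
  "theta L z = ((0, 0), (D2 L (fst (fst z)) (vel (fst z) (snd z)), en L (fst z) (snd z)))"

text \<open>omega^L = d theta^L evaluated on tangent vectors X, Y at z:
  d theta (X,Y) = (D theta X) . Y - (D theta Y) . X.\<close>
definition omega :: "((real^'n) \<times> (real^'n) \<Rightarrow> real) \<Rightarrow> ((real^'n) \<times> real) \<times> ((real^'n) \<times> real)
       \<Rightarrow> ((real^'n) \<times> real) \<times> ((real^'n) \<times> real) \<Rightarrow> ((real^'n) \<times> real) \<times> ((real^'n) \<times> real) \<Rightarrow> real" where
  "omega L z X Y = frechet_derivative (theta L) (at z) X \<bullet> Y - frechet_derivative (theta L) (at z) Y \<bullet> X"

end

theory Submission
  imports Defs
begin


lemma schwarz_approx:
  fixes f :: "'a::real_normed_vector \<Rightarrow> real"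
  assumes S: "open S" "x \<in> S"
  and f: "\<And>y. y \<in> S \<Longrightarrow> (f has_derivative f' y) (at y)"
  and F: "((\<lambda>y. f' y h) has_derivative F) (at x)"
  and e: "e > 0"
  shows "\<exists>d>0. \<forall>t. 0 < t \<and> t < d \<longrightarrow>
     \<bar>(f (x + t *\<^sub>R h + t *\<^sub>R k) - f (x + t *\<^sub>R h) - f (x + t *\<^sub>R k) + f x) - t^2 * F k\<bar>
       \<le> e * t^2 * (2 * norm h + norm k)"
proof -
  have blF: "bounded_linear F" using F has_derivative_bounded_linear by blast
  obtain d1 where d1: "d1 > 0" and d1': "\<And>y. norm (y - x) < d1 \<Longrightarrow>
      norm (f' y h - f' x h - F (y - x)) \<le> e * norm (y - x)"
    using F e unfolding has_derivative_at_alt by blast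
  obtain r where r: "r > 0" "ball x r \<subseteq> S" using S open_contains_ball by blast
  have inS: "x + v \<in> S" if "norm v < r" for v
  proof -
    have "x + v \<in> ball x r" using that by (simp add: dist_norm)
    then show ?thesis using r by blast
  qed
  define d where "d = min d1 r / (norm h + norm k + 1)"
  have hk: "0 < norm h + norm k + 1" using norm_ge_zero[of h] norm_ge_zero[of k] by linarith
  have dpos: "d > 0" using d1 r unfolding d_def by (intro divide_pos_pos) (auto intro: add_nonneg_pos)
  show ?thesis
  proof (intro exI[of _ d] conjI allI impI dpos)
    fix t :: real assume t: "0 < t \<and> t < d"
    have tb: "t * (norm h + norm k) < min d1 r"
    proof -
      have "t * (norm h + norm k) \<le> t * (norm h + norm k + 1)" using t by simp
      also have "\<dots> < d * (norm h + norm k + 1)"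
        using t hk by (intro mult_strict_right_mono) auto
      also have "\<dots> = min d1 r" unfolding d_def using hk by simp
      finally show ?thesis .
    qed
    have nb: "norm ((s * t) *\<^sub>R h + c *\<^sub>R k) < min d1 r" if "0 \<le> s" "s \<le> 1" "0 \<le> c" "c \<le> t" for s c
    proof -
      have "norm ((s * t) *\<^sub>R h + c *\<^sub>R k) \<le> \<bar>s*t\<bar> * norm h + \<bar>c\<bar> * norm k"
        by (metis norm_scaleR norm_triangle_ineq)
      also have "\<dots> \<le> t * norm h + t * norm k"
        using that t by (intro add_mono mult_right_mono) (auto simp: abs_mult mult_le_cancel_right1)
      finally show ?thesis using tb by (simp add: algebra_simps)
    qed
    define g where "g s = f (x + (s * t) *\<^sub>R h + t *\<^sub>R k) - f (x + (s * t) *\<^sub>R h)" for s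
    define g' where "g' s = f' (x + (s * t) *\<^sub>R h + t *\<^sub>R k) (t *\<^sub>R h) - f' (x + (s * t) *\<^sub>R h) (t *\<^sub>R h)" for s
    have der: "DERIV g s :> g' s" if "0 \<le> s" "s \<le> 1" for s
    proof -
      have p1: "x + (s * t) *\<^sub>R h + t *\<^sub>R k \<in> S"
        using nb[of s t] that t inS by (simp add: add.assoc)
      have p2: "x + (s * t) *\<^sub>R h \<in> S"
        using nb[of s 0] that t inS by simp
      have l1: "((\<lambda>s. x + (s * t) *\<^sub>R h + t *\<^sub>R k) has_derivative (\<lambda>u. u *\<^sub>R (t *\<^sub>R h))) (at s)"
        by (auto intro!: derivative_eq_intros)
      have l2: "((\<lambda>s. x + (s * t) *\<^sub>R h) has_derivative (\<lambda>u. u *\<^sub>R (t *\<^sub>R h))) (at s)"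
        by (auto intro!: derivative_eq_intros)
      have c1: "((\<lambda>s. f (x + (s * t) *\<^sub>R h + t *\<^sub>R k)) has_derivative (\<lambda>u. f' (x + (s * t) *\<^sub>R h + t *\<^sub>R k) (u *\<^sub>R (t *\<^sub>R h)))) (at s)"
        using has_derivative_compose[OF l1 f[OF p1]] by simp
      have c2: "((\<lambda>s. f (x + (s * t) *\<^sub>R h)) has_derivative (\<lambda>u. f' (x + (s * t) *\<^sub>R h) (u *\<^sub>R (t *\<^sub>R h)))) (at s)"
        using has_derivative_compose[OF l2 f[OF p2]] by simp
      have lin1: "linear (f' (x + (s * t) *\<^sub>R h + t *\<^sub>R k))"
        using f[OF p1] has_derivative_linear by blast
      have lin2: "linear (f' (x + (s * t) *\<^sub>R h))"
        using f[OF p2] has_derivative_linear by blast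
      have "(g has_derivative (\<lambda>u. f' (x + (s * t) *\<^sub>R h + t *\<^sub>R k) (u *\<^sub>R (t *\<^sub>R h)) - f' (x + (s * t) *\<^sub>R h) (u *\<^sub>R (t *\<^sub>R h)))) (at s)"
        unfolding g_def by (rule has_derivative_diff[OF c1 c2])
      moreover have "(\<lambda>u. f' (x + (s * t) *\<^sub>R h + t *\<^sub>R k) (u *\<^sub>R (t *\<^sub>R h)) - f' (x + (s * t) *\<^sub>R h) (u *\<^sub>R (t *\<^sub>R h))) = (*) (g' s)"
        unfolding g'_def using linear_scale[OF lin1] linear_scale[OF lin2]
        by (auto simp: algebra_simps fun_eq_iff)
      ultimately show ?thesis by (simp add: has_field_derivative_def)
    qed
    show "\<bar>(f (x + t *\<^sub>R h + t *\<^sub>R k) - f (x + t *\<^sub>R h) - f (x + t *\<^sub>R k) + f x) - t^2 * F k\<bar>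
       \<le> e * t^2 * (2 * norm h + norm k)"
    proof -
      obtain \<sigma> where \<sigma>: "0 < \<sigma>" "\<sigma> < 1" and mv: "g 1 - g 0 = (1 - 0) * g' \<sigma>"
        using MVT2[of 0 1 g g'] der by auto
      have g10: "g 1 - g 0 = f (x + t *\<^sub>R h + t *\<^sub>R k) - f (x + t *\<^sub>R h) - f (x + t *\<^sub>R k) + f x"
        unfolding g_def by simp
      define p where "p = x + (\<sigma> * t) *\<^sub>R h + t *\<^sub>R k"
      define q where "q = x + (\<sigma> * t) *\<^sub>R h"
      have pS: "p \<in> S" unfolding p_def using nb[of \<sigma> t] \<sigma> t inS by (simp add: add.assoc)
      have qS: "q \<in> S" unfolding q_def using nb[of \<sigma> 0] \<sigma> t inS by simp
      have linp: "linear (f' p)" using f[OF pS] has_derivative_linear by blast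
      have linq: "linear (f' q)" using f[OF qS] has_derivative_linear by blast
      have gs: "g' \<sigma> = t * (f' p h - f' q h)"
        using linear_scale[OF linp[unfolded p_def]] linear_scale[OF linq[unfolded q_def]]
        unfolding g'_def p_def q_def by (simp add: algebra_simps)
      have px: "p - x = (\<sigma> * t) *\<^sub>R h + t *\<^sub>R k" unfolding p_def by simp
      have qx: "q - x = (\<sigma> * t) *\<^sub>R h" unfolding q_def by simp
      have sh: "\<sigma> * norm h \<le> norm h" using \<sigma> mult_right_mono[of \<sigma> 1 "norm h"] by simp
      have np: "norm (p - x) \<le> t * norm h + t * norm k"
      proof -
        have "norm (p - x) \<le> norm ((\<sigma> * t) *\<^sub>R h) + norm (t *\<^sub>R k)" unfolding px by (rule norm_triangle_ineq)
        also have "\<dots> \<le> t * norm h + t * norm k"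
          using \<sigma> t sh by (auto simp: abs_mult intro!: add_mono mult_right_mono)
        finally show ?thesis .
      qed
      have nq: "norm (q - x) \<le> t * norm h"
        unfolding qx using \<sigma> t sh by (auto simp: abs_mult intro!: mult_right_mono)
      have R1: "\<bar>f' p h - f' x h - F (p - x)\<bar> \<le> e * norm (p - x)"
        using d1'[of p] nb[of \<sigma> t] \<sigma> t px by simp
      have R2: "\<bar>f' q h - f' x h - F (q - x)\<bar> \<le> e * norm (q - x)"
        using d1'[of q] nb[of \<sigma> 0] \<sigma> t qx by simp
      have FF: "F (p - x) - F (q - x) = t * F k"
        unfolding px qx using linear_add[OF bounded_linear.linear[OF blF]] linear_scale[OF bounded_linear.linear[OF blF]] by simp
      have eq: "(g 1 - g 0) - t^2 * F k = t * ((f' p h - f' x h - F (p - x)) - (f' q h - f' x h - F (q - x)))"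
        using mv gs FF by (simp add: power2_eq_square algebra_simps)
      have "\<bar>(g 1 - g 0) - t^2 * F k\<bar> \<le> t * (e * norm (p - x) + e * norm (q - x))"
        unfolding eq using t R1 R2 by (simp add: abs_mult)
      also have "\<dots> \<le> t * (e * (t * norm h + t * norm k) + e * (t * norm h))"
        using t e np nq by (intro mult_left_mono add_mono) auto
      also have "\<dots> = e * t^2 * (2 * norm h + norm k)" by (simp add: power2_eq_square algebra_simps)
      finally show ?thesis using g10 by simp
    qed
  qed
qed

lemma schwarz:
  fixes f :: "'a::real_normed_vector \<Rightarrow> real"
  assumes S: "open S" "x \<in> S"
  and f: "\<And>y. y \<in> S \<Longrightarrow> (f has_derivative f' y) (at y)"
  and F: "\<And>v. ((\<lambda>y. f' y v) has_derivative F v) (at x)"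
  shows "F h k = F k h"
proof -
  define C where "C = 3 * (norm h + norm k) + 1"
  have hk0: "0 \<le> norm h + norm k" by simp
  have C: "C > 0" unfolding C_def using hk0 by (simp add: add_nonneg_pos)
  have "\<bar>F h k - F k h\<bar> \<le> 0 + e" if e: "e > 0" for e
  proof -
    define e' where "e' = e / C"
    have e': "e' > 0" using e C by (simp add: e'_def)
    obtain d1 where d1: "d1 > 0" and a1: "\<And>t. 0 < t \<and> t < d1 \<Longrightarrow>
     \<bar>(f (x + t *\<^sub>R h + t *\<^sub>R k) - f (x + t *\<^sub>R h) - f (x + t *\<^sub>R k) + f x) - t^2 * F h k\<bar>
       \<le> e' * t^2 * (2 * norm h + norm k)"
      using schwarz_approx[OF S f F e'] by blast
    obtain d2 where d2: "d2 > 0" and a2: "\<And>t. 0 < t \<and> t < d2 \<Longrightarrow>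
     \<bar>(f (x + t *\<^sub>R k + t *\<^sub>R h) - f (x + t *\<^sub>R k) - f (x + t *\<^sub>R h) + f x) - t^2 * F k h\<bar>
       \<le> e' * t^2 * (2 * norm k + norm h)"
      using schwarz_approx[OF S f F e'] by blast
    define t where "t = min d1 d2 / 2"
    have t: "0 < t" "t < d1" "t < d2" using d1 d2 by (auto simp: t_def)
    define \<Delta> where "\<Delta> = f (x + t *\<^sub>R h + t *\<^sub>R k) - f (x + t *\<^sub>R h) - f (x + t *\<^sub>R k) + f x"
    have b1: "\<bar>\<Delta> - t^2 * F h k\<bar> \<le> e' * t^2 * (2 * norm h + norm k)"
      using a1[of t] t unfolding \<Delta>_def by simp
    have b2: "\<bar>\<Delta> - t^2 * F k h\<bar> \<le> e' * t^2 * (2 * norm k + norm h)"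
      using a2[of t] t unfolding \<Delta>_def by (simp add: add.commute add.left_commute)
    have "t^2 * \<bar>F h k - F k h\<bar> = \<bar>(\<Delta> - t^2 * F k h) - (\<Delta> - t^2 * F h k)\<bar>"
    proof -
      have "(\<Delta> - t^2 * F k h) - (\<Delta> - t^2 * F h k) = t^2 * (F h k - F k h)" by (simp add: algebra_simps)
      then show ?thesis by (simp add: abs_mult)
    qed
    also have "\<dots> \<le> \<bar>\<Delta> - t^2 * F k h\<bar> + \<bar>\<Delta> - t^2 * F h k\<bar>" by (rule abs_triangle_ineq4)
    also have "\<dots> \<le> e' * t^2 * (2 * norm k + norm h) + e' * t^2 * (2 * norm h + norm k)"
      using b1 b2 by linarith
    also have "\<dots> \<le> t^2 * (e' * C)" unfolding C_def using e' t by (simp add: algebra_simps)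
    finally have "\<bar>F h k - F k h\<bar> \<le> e' * C" using t by simp
    then show ?thesis using C by (simp add: e'_def)
  qed
  then have "\<bar>F h k - F k h\<bar> \<le> 0" by (rule field_le_epsilon)
  then show ?thesis by simp
qed



lemma lin_expand:
  fixes g :: "'a::euclidean_space \<Rightarrow> 'b::real_vector"
  assumes "linear g" shows "g v = (\<Sum>b\<in>Basis. (v \<bullet> b) *\<^sub>R g b)"
proof -
  have "g v = g (\<Sum>b\<in>Basis. (v \<bullet> b) *\<^sub>R b)" by (simp add: euclidean_representation)
  also have "\<dots> = (\<Sum>b\<in>Basis. (v \<bullet> b) *\<^sub>R g b)"
    using assms by (simp add: linear_sum linear_scale)
  finally show ?thesis .
qed

lemma deriv_dir_diff:
  fixes f :: "'a::euclidean_space \<Rightarrow> 'b::real_normed_vector"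
  assumes S: "open S" "x \<in> S" and fd: "\<forall>y\<in>S. f differentiable at y"
  and b: "\<forall>b\<in>Basis. (\<lambda>y. frechet_derivative f (at y) b) differentiable at x"
  shows "(\<lambda>y. frechet_derivative f (at y) v) differentiable at x"
proof -
  have "(\<lambda>y. \<Sum>b\<in>Basis. (v \<bullet> b) *\<^sub>R frechet_derivative f (at y) b) differentiable at x"
    using b by (intro differentiable_sum) auto
  then obtain D where D: "((\<lambda>y. \<Sum>b\<in>Basis. (v \<bullet> b) *\<^sub>R frechet_derivative f (at y) b) has_derivative D) (at x)"
    unfolding differentiable_def by blast
  have "((\<lambda>y. frechet_derivative f (at y) v) has_derivative D) (at x)"
    apply (rule has_derivative_transform_within_open[OF D S])
    using fd lin_expand[OF linear_frechet_derivative] by metis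
  then show ?thesis unfolding differentiable_def by blast
qed

lemma smooth_C2:
  assumes "smooth_on S f"
  shows "\<forall>x\<in>S. f differentiable at x"
    and "\<forall>b\<in>Basis. \<forall>x\<in>S. (\<lambda>y. frechet_derivative f (at y) b) differentiable at x"
proof -
  have "Ck_on (Suc (Suc 0)) S f" using assms unfolding smooth_on_def by blast
  then show "\<forall>x\<in>S. f differentiable at x"
    and "\<forall>b\<in>Basis. \<forall>x\<in>S. (\<lambda>y. frechet_derivative f (at y) b) differentiable at x"
    by auto
qed

lemma smooth_dir_diff:
  assumes "smooth_on S f" "open S" "x \<in> S"
  shows "(\<lambda>y. frechet_derivative f (at y) v) differentiable at x"
  using deriv_dir_diff[OF assms(2,3)] smooth_C2[OF assms(1)] assms(3) by blast

lemma Basis_vec_axis: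
  assumes "(b :: real^'n) \<in> Basis" obtains i where "b = axis i 1"
  using assms unfolding Basis_vec_def by auto

lemma D1_comp:
  assumes "(b :: real^'n) \<in> Basis"
  shows "D1 L q v \<bullet> b = frechet_derivative L (at (q, v)) (b, 0)"
  using assms by (elim Basis_vec_axis) (simp add: D1_def inner_axis)

lemma D2_comp:
  assumes "(b :: real^'n) \<in> Basis"
  shows "D2 L q v \<bullet> b = frechet_derivative L (at (q, v)) (0, b)"
  using assms by (elim Basis_vec_axis) (simp add: D2_def inner_axis)

lemma L_deriv_split:
  fixes L :: "(real^'n) \<times> (real^'n) \<Rightarrow> real"
  assumes "L differentiable at (q, v)"
  shows "frechet_derivative L (at (q, v)) (h, k) = D1 L q v \<bullet> h + D2 L q v \<bullet> k"
proof -
  let ?L = "frechet_derivative L (at (q, v))"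
  have lin: "linear ?L" using linear_frechet_derivative[OF assms] .
  have sc1: "?L (r *\<^sub>R b, 0) = r * ?L (b, 0)" for r b
  proof -
    have "(r *\<^sub>R b, 0) = r *\<^sub>R (b, 0::real^'n)" by simp
    then show ?thesis using linear_scale[OF lin, of r "(b,0)"] by simp
  qed
  have sc2: "?L (0, r *\<^sub>R b) = r * ?L (0, b)" for r b
  proof -
    have "(0, r *\<^sub>R b) = r *\<^sub>R (0::real^'n, b)" by simp
    then show ?thesis using linear_scale[OF lin, of r "(0,b)"] by simp
  qed
  have lin1: "linear (\<lambda>h. ?L (h, 0))"
    by (intro linearI) (simp_all add: linear_add[OF lin, symmetric] sc1)
  have lin2: "linear (\<lambda>k. ?L (0, k))"
    by (intro linearI) (simp_all add: linear_add[OF lin, symmetric] sc2)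
  have "?L (h, k) = ?L (h, 0) + ?L (0, k)" using linear_add[OF lin, of "(h,0)" "(0,k)"] by simp
  also have "?L (h, 0) = D1 L q v \<bullet> h"
  proof -
    have "D1 L q v \<bullet> h = (\<Sum>b\<in>Basis. (h \<bullet> b) * ?L (b, 0))"
      unfolding euclidean_inner[of "D1 L q v" h] by (intro sum.cong) (simp_all add: D1_comp)
    then show ?thesis using lin_expand[OF lin1, of h] by simp
  qed
  also have "?L (0, k) = D2 L q v \<bullet> k"
  proof -
    have "D2 L q v \<bullet> k = (\<Sum>b\<in>Basis. (k \<bullet> b) * ?L (0, b))"
      unfolding euclidean_inner[of "D2 L q v" k] by (intro sum.cong) (simp_all add: D2_comp)
    then show ?thesis using lin_expand[OF lin2, of k] by simp
  qed
  finally show ?thesis .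
qed

lemma D1_repr: "D1 L q v = (\<Sum>b\<in>Basis. frechet_derivative L (at (q, v)) (b, 0) *\<^sub>R b)"
  by (subst euclidean_representation[symmetric, of "D1 L q v"]) (simp add: D1_comp)

lemma D2_repr: "D2 L q v = (\<Sum>b\<in>Basis. frechet_derivative L (at (q, v)) (0, b) *\<^sub>R b)"
  by (subst euclidean_representation[symmetric, of "D2 L q v"]) (simp add: D2_comp)

lemma D12_diff:
  fixes L :: "(real^'n) \<times> (real^'n) \<Rightarrow> real"
  assumes L: "smooth_on UNIV L"
  and f1: "f1 differentiable at z" and f2: "f2 differentiable at z"
  shows "(\<lambda>z. D1 L (f1 z) (f2 z)) differentiable at z"
    and "(\<lambda>z. D2 L (f1 z) (f2 z)) differentiable at z"
proof -
  have p: "(\<lambda>z. (f1 z, f2 z)) differentiable at z" using f1 f2 by simp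
  have c: "(\<lambda>z. frechet_derivative L (at (f1 z, f2 z)) w) differentiable at z" for w
    using differentiable_compose[OF smooth_dir_diff[OF L open_UNIV UNIV_I] p, of w] by simp
  show "(\<lambda>z. D1 L (f1 z) (f2 z)) differentiable at z"
    unfolding D1_repr using c by (intro differentiable_sum differentiable_scaleR) auto
  show "(\<lambda>z. D2 L (f1 z) (f2 z)) differentiable at z"
    unfolding D2_repr using c by (intro differentiable_sum differentiable_scaleR) auto
qed



definition thetam :: "((real^'n) \<times> (real^'n) \<Rightarrow> real) \<Rightarrow> ((real^'n) \<times> real) \<times> ((real^'n) \<times> real)
                     \<Rightarrow> ((real^'n) \<times> real) \<times> ((real^'n) \<times> real)" where
  "thetam L z = (((snd (snd z) - snd (fst z)) *\<^sub>R D1 L (fst (fst z)) (vel (fst z) (snd z))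
                   - D2 L (fst (fst z)) (vel (fst z) (snd z)), - en L (fst z) (snd z)), (0, 0))"

definition Ld :: "((real^'n) \<times> (real^'n) \<Rightarrow> real) \<Rightarrow> ((real^'n) \<times> real) \<times> ((real^'n) \<times> real) \<Rightarrow> real" where
  "Ld L z = (snd (snd z) - snd (fst z)) * L (fst (fst z), vel (fst z) (snd z))"

lemma vel_deriv:
  fixes z :: "((real^'n) \<times> real) \<times> ((real^'n) \<times> real)"
  assumes "snd (snd z) \<noteq> snd (fst z)"
  shows "((\<lambda>z. vel (fst z) (snd z)) has_derivative
     (\<lambda>X. ((fst (snd X) - fst (fst X)) - (snd (snd X) - snd (fst X)) *\<^sub>R vel (fst z) (snd z)) /\<^sub>R (snd (snd z) - snd (fst z)))) (at z)"
  using assms unfolding vel_def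
  apply (auto intro!: derivative_eq_intros simp: divide_inverse_commute)
  apply (simp add: fun_eq_iff scaleR_diff_right scaleR_scaleR mult_ac)
  done

lemma Ld_deriv:
  fixes L :: "(real^'n) \<times> (real^'n) \<Rightarrow> real"
  assumes L: "smooth_on UNIV L" and tz: "snd (snd z) \<noteq> snd (fst z)"
  shows "(Ld L has_derivative (\<lambda>X. theta L z \<bullet> X + thetam L z \<bullet> X)) (at z)"
proof -
  obtain qa ta qb tb where z: "z = ((qa, ta), (qb, tb))" by (metis prod.collapse)
  define v where "v = vel (qa, ta) (qb, tb)"
  have tne: "tb - ta \<noteq> 0" using tz z by simp
  have Ldif: "L differentiable at p" for p using smooth_C2(1)[OF L] by blast
  have hL: "(L has_derivative frechet_derivative L (at (qa, v))) (at (qa, v))"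
    using Ldif frechet_derivative_works by blast
  have hA: "((\<lambda>z. (fst (fst z), vel (fst z) (snd z))) has_derivative
     (\<lambda>X. (fst (fst X), ((fst (snd X) - fst (fst X)) - (snd (snd X) - snd (fst X)) *\<^sub>R v) /\<^sub>R (tb - ta)))) (at z)"
    using vel_deriv[OF tz] unfolding z v_def by (auto intro!: derivative_eq_intros)
  have hC: "((\<lambda>z. L (fst (fst z), vel (fst z) (snd z))) has_derivative
     (\<lambda>X. frechet_derivative L (at (qa, v)) (fst (fst X), ((fst (snd X) - fst (fst X)) - (snd (snd X) - snd (fst X)) *\<^sub>R v) /\<^sub>R (tb - ta)))) (at z)"
    using has_derivative_compose[OF hA] hL z v_def by simp
  have hM: "(Ld L has_derivative (\<lambda>X. (snd (snd z) - snd (fst z)) * frechet_derivative L (at (qa, v)) (fst (fst X), ((fst (snd X) - fst (fst X)) - (snd (snd X) - snd (fst X)) *\<^sub>R v) /\<^sub>R (tb - ta))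
        + (snd (snd X) - snd (fst X)) * L (fst (fst z), vel (fst z) (snd z)))) (at z)"
    unfolding Ld_def[abs_def] by (rule has_derivative_mult[OF _ hC]) (auto intro!: derivative_eq_intros)
  show ?thesis
  proof (rule has_derivative_eq_rhs[OF hM], rule ext)
    fix X :: "((real^'n) \<times> real) \<times> ((real^'n) \<times> real)"
    obtain dqa dta dqb dtb where X: "X = ((dqa, dta), (dqb, dtb))" by (metis prod.collapse)
    show "(snd (snd z) - snd (fst z)) * frechet_derivative L (at (qa, v)) (fst (fst X), ((fst (snd X) - fst (fst X)) - (snd (snd X) - snd (fst X)) *\<^sub>R v) /\<^sub>R (tb - ta))
        + (snd (snd X) - snd (fst X)) * L (fst (fst z), vel (fst z) (snd z)) = theta L z \<bullet> X + thetam L z \<bullet> X"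
    proof -
      have e1: "D2 L qa v \<bullet> (((dqb - dqa) - (dtb - dta) *\<^sub>R v) /\<^sub>R (tb - ta))
          = (D2 L qa v \<bullet> dqb - D2 L qa v \<bullet> dqa - (dtb - dta) * (D2 L qa v \<bullet> v)) / (tb - ta)"
        by (simp add: inner_diff_right divide_inverse_commute)
      have e2: "(tb - ta) * ((D2 L qa v \<bullet> dqb - D2 L qa v \<bullet> dqa - (dtb - dta) * (D2 L qa v \<bullet> v)) / (tb - ta))
          = D2 L qa v \<bullet> dqb - D2 L qa v \<bullet> dqa - (dtb - dta) * (D2 L qa v \<bullet> v)" using tne by simp
      have e3: "tb * (inverse (tb - ta) * y) = y + ta * (inverse (tb - ta) * y)" for y
      proof -
        have "tb * (inverse (tb - ta) * y) = ((tb - ta) + ta) * (inverse (tb - ta) * y)" by simp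
        also have "\<dots> = y + ta * (inverse (tb - ta) * y)" using tne by (simp only: distrib_right) simp
        finally show ?thesis .
      qed
      show ?thesis
        unfolding L_deriv_split[OF Ldif] z X theta_def thetam_def en_def
        by (simp add: v_def[symmetric] inner_diff_left inner_scaleR_left inner_diff_right algebra_simps e3)
    qed
  qed
qed



lemma vel_diff:
  fixes z :: "((real^'n) \<times> real) \<times> ((real^'n) \<times> real)"
  assumes "snd (snd z) \<noteq> snd (fst z)"
  shows "(\<lambda>z. vel (fst z) (snd z)) differentiable at z"
  using vel_deriv[OF assms] unfolding differentiable_def by blast

lemma fst_fst_diff: "(\<lambda>z. fst (fst z)) differentiable at z"
  unfolding differentiable_def by (auto intro!: derivative_eq_intros)

lemma snd_snd_diff: "(\<lambda>z. snd (snd z)) differentiable at z"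
  unfolding differentiable_def by (auto intro!: derivative_eq_intros)

lemma snd_fst_diff: "(\<lambda>z. snd (fst z)) differentiable at z"
  unfolding differentiable_def by (auto intro!: derivative_eq_intros)

lemma en_diff:
  fixes L :: "(real^'n) \<times> (real^'n) \<Rightarrow> real"
  assumes L: "smooth_on UNIV L" and tz: "snd (snd z) \<noteq> snd (fst z)"
  shows "(\<lambda>z. en L (fst z) (snd z)) differentiable at z"
    and "(\<lambda>z. D1 L (fst (fst z)) (vel (fst z) (snd z))) differentiable at z"
    and "(\<lambda>z. D2 L (fst (fst z)) (vel (fst z) (snd z))) differentiable at z"
proof -
  have Ldif: "L differentiable at p" for p using smooth_C2(1)[OF L] by blast
  have v: "(\<lambda>z. vel (fst z) (snd z)) differentiable at z" by (rule vel_diff[OF tz])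
  have p: "(\<lambda>z. (fst (fst z), vel (fst z) (snd z))) differentiable at z"
    by (rule differentiable_Pair[OF fst_fst_diff v])
  have l: "(\<lambda>z. L (fst (fst z), vel (fst z) (snd z))) differentiable at z"
    using differentiable_compose[OF Ldif p] .
  show d1: "(\<lambda>z. D1 L (fst (fst z)) (vel (fst z) (snd z))) differentiable at z"
    using D12_diff(1)[OF L fst_fst_diff v] .
  show d2: "(\<lambda>z. D2 L (fst (fst z)) (vel (fst z) (snd z))) differentiable at z"
    using D12_diff(2)[OF L fst_fst_diff v] .
  show "(\<lambda>z. en L (fst z) (snd z)) differentiable at z"
    unfolding en_def using l d2 v by (intro differentiable_diff differentiable_inner) auto
qed

lemma theta_diff:
  fixes L :: "(real^'n) \<times> (real^'n) \<Rightarrow> real"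
  assumes L: "smooth_on UNIV L" and tz: "snd (snd z) \<noteq> snd (fst z)"
  shows "theta L differentiable at z"
  unfolding theta_def[abs_def] using en_diff[OF L tz] by (intro differentiable_Pair) auto

lemma thetam_diff:
  fixes L :: "(real^'n) \<times> (real^'n) \<Rightarrow> real"
  assumes L: "smooth_on UNIV L" and tz: "snd (snd z) \<noteq> snd (fst z)"
  shows "thetam L differentiable at z"
proof -
  have t: "(\<lambda>z. snd (snd z) - snd (fst z)) differentiable at z"
    unfolding differentiable_def by (auto intro!: derivative_eq_intros)
  show ?thesis
    unfolding thetam_def[abs_def]
    by (intro differentiable_Pair differentiable_diff differentiable_scaleR differentiable_minus
        differentiable_const snd_snd_diff snd_fst_diff en_diff[OF L tz])
qed

lemma W_open: "open {z :: ((real^'n) \<times> real) \<times> ((real^'n) \<times> real). snd (snd z) \<noteq> snd (fst z)}"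
  by (intro open_Collect_neq continuous_intros)

lemma part2:
  fixes L :: "(real^'n) \<times> (real^'n) \<Rightarrow> real"
    and G :: "((real^'n) \<times> real) \<times> ((real^'n) \<times> real) \<Rightarrow> ((real^'n) \<times> real) \<times> ((real^'n) \<times> real)"
  assumes L: "smooth_on UNIV L" and U: "open U" and tU: "\<forall>z\<in>U. snd (fst z) \<noteq> snd (snd z)"
    and G: "smooth_on U G"
    and sch: "\<forall>z\<in>U. fst (G z) = snd z \<and> scheme L (fst z) (snd z) (snd (G z))"
    and z: "z \<in> U"
  shows "omega L (G z) (frechet_derivative G (at z) X) (frechet_derivative G (at z) Y) = omega L z X Y"
proof -
  define Gd where "Gd w = frechet_derivative G (at w)" for w
  have hG: "(G has_derivative Gd w) (at w)" if "w \<in> U" for w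
    using smooth_C2(1)[OF G] that frechet_derivative_works unfolding Gd_def by blast
  have fstGd: "fst (Gd w Y) = snd Y" if w: "w \<in> U" for w Y
  proof -
    have "((\<lambda>w. fst (G w)) has_derivative (\<lambda>Y. fst (Gd w Y))) (at w)"
      using hG[OF w] by (auto intro!: derivative_eq_intros)
    then have "(snd has_derivative (\<lambda>Y. fst (Gd w Y))) (at w)"
      by (rule has_derivative_transform_within_open[OF _ U w]) (use sch in auto)
    moreover have "(snd has_derivative snd) (at w)" by (rule has_derivative_snd[OF has_derivative_ident])
    ultimately have "(\<lambda>Y. fst (Gd w Y)) = snd" by (rule has_derivative_unique)
    from fun_cong[OF this, of Y] show ?thesis by simp
  qed
  have tm: "thetam L (G w) = ((- D2 L (fst (fst w)) (vel (fst w) (snd w)), - en L (fst w) (snd w)), (0, 0))"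
    if w: "w \<in> U" for w
  proof -
    obtain c where Gw: "G w = (snd w, c)" using sch w by (metis prod.collapse)
    have s: "scheme L (fst w) (snd w) c" using sch w Gw by auto
    then have e: "en L (snd w) c = en L (fst w) (snd w)"
      and d: "(snd c - snd (snd w)) *\<^sub>R D1 L (fst (snd w)) (vel (snd w) c)
              - (D2 L (fst (snd w)) (vel (snd w) c) - D2 L (fst (fst w)) (vel (fst w) (snd w))) = 0"
      unfolding scheme_def by auto
    from d have d': "(snd c - snd (snd w)) *\<^sub>R D1 L (fst (snd w)) (vel (snd w) c)
              - D2 L (fst (snd w)) (vel (snd w) c) = - D2 L (fst (fst w)) (vel (fst w) (snd w))"
      by (simp add: algebra_simps eq_neg_iff_add_eq_0)
    show ?thesis unfolding thetam_def Gw using e d' by simp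
  qed
  have pw: "thetam L (G w) \<bullet> Gd w Y = - (theta L w \<bullet> Y)" if w: "w \<in> U" for w Y
  proof -
    have "thetam L (G w) \<bullet> Gd w Y = - (D2 L (fst (fst w)) (vel (fst w) (snd w)) \<bullet> fst (fst (Gd w Y)))
        - en L (fst w) (snd w) * snd (fst (Gd w Y))"
      unfolding tm[OF w] by (simp add: inner_prod_def)
    also have "\<dots> = - (theta L w \<bullet> Y)"
      unfolding fstGd[OF w] theta_def by (simp add: inner_prod_def)
    finally show ?thesis .
  qed
  have tzU: "snd (snd w) \<noteq> snd (fst w)" if "w \<in> U" for w using tU that by auto
  have tGz: "snd (snd (G z)) \<noteq> snd (fst (G z))"
    using sch z unfolding scheme_def by auto
  define Tm' where "Tm' = frechet_derivative (thetam L) (at (G z))"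
  have hTm: "(thetam L has_derivative Tm') (at (G z))"
    using thetam_diff[OF L tGz] frechet_derivative_works unfolding Tm'_def by blast
  define Th' where "Th' = frechet_derivative (theta L) (at z)"
  have hTh: "(theta L has_derivative Th') (at z)"
    using theta_diff[OF L tzU[OF z]] frechet_derivative_works unfolding Th'_def by blast
  define G2 where "G2 v = frechet_derivative (\<lambda>w. Gd w v) (at z)" for v
  have hG2: "((\<lambda>w. Gd w v) has_derivative G2 v) (at z)" for v
    using smooth_dir_diff[OF G U z, of v] frechet_derivative_works unfolding G2_def Gd_def by blast
  have E1: "thetam L (G z) \<bullet> G2 Y X + Tm' (Gd z X) \<bullet> Gd z Y = - (Th' X \<bullet> Y)" for X Y
  proof -
    have hc: "((\<lambda>w. thetam L (G w)) has_derivative (\<lambda>X. Tm' (Gd z X))) (at z)"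
      using has_derivative_compose[OF hG[OF z] hTm] by (simp add: o_def)
    have h1: "((\<lambda>w. thetam L (G w) \<bullet> Gd w Y) has_derivative
        (\<lambda>X. thetam L (G z) \<bullet> G2 Y X + Tm' (Gd z X) \<bullet> Gd z Y)) (at z)"
      by (rule has_derivative_inner[OF hc hG2])
    have h2: "((\<lambda>w. - (theta L w \<bullet> Y)) has_derivative (\<lambda>X. - (Th' X \<bullet> Y))) (at z)"
      using hTh by (auto intro!: derivative_eq_intros)
    have h1': "((\<lambda>w. - (theta L w \<bullet> Y)) has_derivative
        (\<lambda>X. thetam L (G z) \<bullet> G2 Y X + Tm' (Gd z X) \<bullet> Gd z Y)) (at z)"
      by (rule has_derivative_transform_within_open[OF h1 U z]) (simp add: pw)
    have "(\<lambda>X. thetam L (G z) \<bullet> G2 Y X + Tm' (Gd z X) \<bullet> Gd z Y) = (\<lambda>X. - (Th' X \<bullet> Y))"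
      using has_derivative_unique[OF h1' h2] .
    from fun_cong[OF this, of X] show ?thesis by simp
  qed
  have S1: "thetam L (G z) \<bullet> G2 Y X = thetam L (G z) \<bullet> G2 X Y"
  proof (rule schwarz[where f = "\<lambda>w. thetam L (G z) \<bullet> G w" and S = U and x = z
        and f' = "\<lambda>w v. thetam L (G z) \<bullet> Gd w v" and F = "\<lambda>v u. thetam L (G z) \<bullet> G2 v u", OF U z])
    show "((\<lambda>w. thetam L (G z) \<bullet> G w) has_derivative (\<lambda>v. thetam L (G z) \<bullet> Gd w v)) (at w)"
      if "w \<in> U" for w
      using hG[OF that] by (auto intro!: derivative_eq_intros)
    show "((\<lambda>w. thetam L (G z) \<bullet> Gd w v) has_derivative (\<lambda>u. thetam L (G z) \<bullet> G2 v u)) (at z)" for v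
      using hG2[of v] by (auto intro!: derivative_eq_intros)
  qed
  define A where "A = Gd z X"
  define B where "B = Gd z Y"
  have S2: "Th'G B \<bullet> A + Tm' B \<bullet> A = Th'G A \<bullet> B + Tm' A \<bullet> B" if "Th'G = frechet_derivative (theta L) (at (G z))" for Th'G
  proof -
    have hThG: "(theta L has_derivative Th'G) (at (G z))"
      using theta_diff[OF L tGz] frechet_derivative_works that by blast
    show ?thesis
    proof (rule schwarz[where f = "Ld L" and S = "{z. snd (snd z) \<noteq> snd (fst z)}" and x = "G z"
        and f' = "\<lambda>y X. theta L y \<bullet> X + thetam L y \<bullet> X" and F = "\<lambda>v u. Th'G u \<bullet> v + Tm' u \<bullet> v", OF W_open])
      show "G z \<in> {z. snd (snd z) \<noteq> snd (fst z)}" using tGz by simp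
      show "(Ld L has_derivative (\<lambda>X. theta L y \<bullet> X + thetam L y \<bullet> X)) (at y)"
        if "y \<in> {z. snd (snd z) \<noteq> snd (fst z)}" for y
        using Ld_deriv[OF L] that by auto
      show "((\<lambda>y. theta L y \<bullet> v + thetam L y \<bullet> v) has_derivative (\<lambda>u. Th'G u \<bullet> v + Tm' u \<bullet> v)) (at (G z))" for v
        using hThG hTm by (auto intro!: derivative_eq_intros)
    qed
  qed
  have "omega L (G z) A B = - (Tm' A \<bullet> B - Tm' B \<bullet> A)"
    unfolding omega_def using S2[OF refl] unfolding Tm'_def by (simp add: algebra_simps)
  also have "\<dots> = omega L z X Y"
    unfolding omega_def Th'_def[symmetric] using E1[of Y X] E1[of X Y] S1
    unfolding A_def B_def by (simp add: algebra_simps)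
  finally show ?thesis unfolding A_def B_def Gd_def .
qed


lemma part1:
  fixes L :: "(real^'n) \<times> (real^'n) \<Rightarrow> real" and x :: "nat \<Rightarrow> (real^'n) \<times> real"
  assumes sch: "\<forall>k\<ge>1. scheme L (x (k - 1)) (x k) (x (k + 1))" and k: "k \<ge> 1"
  shows "energy L x k = - en L (x (k - 1)) (x k) \<and> energy L x k = energy L x 1"
proof -
  have ee: "energy L x j = - en L (x (j - 1)) (x j)" for j
    unfolding energy_def en_def by (simp only: minus_diff_eq)
  have c: "en L (x j) (x (Suc j)) = en L (x 0) (x 1)" for j
  proof (induction j)
    case 0 then show ?case by simp
  next
    case (Suc j)
    have s: "scheme L (x (Suc j - 1)) (x (Suc j)) (x (Suc j + 1))" using sch by (metis le_add1 plus_1_eq_Suc)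
    have e1: "Suc j - 1 = j" "Suc j + 1 = Suc (Suc j)" by simp_all
    have "scheme L (x j) (x (Suc j)) (x (Suc (Suc j)))" using s unfolding e1 .
    then have "en L (x (Suc j)) (x (Suc (Suc j))) = en L (x j) (x (Suc j))"
      unfolding scheme_def by blast
    then show ?case using Suc.IH by simp
  qed
  obtain j where j: "k = Suc j" using k by (cases k) auto
  have "energy L x k = - en L (x 0) (x 1)" using ee[of k] c[of j] j by simp
  moreover have "energy L x 1 = - en L (x 0) (x 1)" using ee[of 1] by simp
  ultimately show ?thesis using ee[of k] by simp
qed


theorem mainTheorem5:
  fixes L :: "(real^'n) \<times> (real^'n) \<Rightarrow> real"
  assumes "smooth_on UNIV L"
  shows "(\<forall>x :: nat \<Rightarrow> (real^'n) \<times> real.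
            (\<forall>k. snd (x (Suc k)) \<noteq> snd (x k)) \<longrightarrow>
            (\<forall>k\<ge>1. scheme L (x (k - 1)) (x k) (x (k + 1))) \<longrightarrow>
            (\<forall>k\<ge>1. energy L x k = - en L (x (k - 1)) (x k) \<and> energy L x k = energy L x 1))
       \<and> (\<forall>(U :: (((real^'n) \<times> real) \<times> ((real^'n) \<times> real)) set) G.
            open U \<longrightarrow> (\<forall>z\<in>U. snd (fst z) \<noteq> snd (snd z)) \<longrightarrow> smooth_on U G \<longrightarrow>
            (\<forall>z\<in>U. fst (G z) = snd z \<and> scheme L (fst z) (snd z) (snd (G z))) \<longrightarrow>
            (\<forall>z\<in>U. \<forall>X Y. omega L (G z) (frechet_derivative G (at z) X) (frechet_derivative G (at z) Y)
                          = omega L z X Y))"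
  apply (intro conjI allI impI ballI)
    apply (rule part1[THEN conjunct1]; assumption)
   apply (rule part1[THEN conjunct2]; assumption)
  apply (rule part2[OF assms]; assumption)
  done

end
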